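(* Let $n\ge2$ and let $z_1,\dots,z_n$ be indeterminates. For all integers $m,k\ge0$, \[ E(n)_{m+1,m+k+1}=\sum_{i=0}^{m}\binom{m}{i}\frac{(m+k)!}{(i+k)!}\,M(m+1-i,\,k+2i,\,n). \]
   Context: For distinct $i,j\in\{1,\dots,n\}$ and $m\ge0$, $e^{(i,j)}_m$ is the elementary symmetric polynomial of degree $m$ in the variables $\{z_l:l\ne i,j\}$ ($e^{(i,j)}_0=1$, and $0$ if $m>n-2$). $E(n)$ is the infinite matrix with entries $E(n)_{r,s}=(r-1)!(s-1)!\sum_{1\le i<j\le n}e^{(i,j)}_{r-1}e^{(i,j)}_{s-1}(z_i-z_j)^2$ for $r,s\ge1$. For $m_2\ge1$, $m_1\ge0$, with $N=m_1+m_2+1$ and sums over all $N$-tuples $(b_1,\dots,b_N)$ of pairwise distinct elements of $\{1,\dots,n\}$, \[ M(m_2,m_1,n)=\sum_{b} z_{b_1}^2\cdots z_{b_{m_2}}^2\,z_{b_{m_2+1}}\cdots z_{b_{m_2+m_1}}\;-\;\sum_{b} z_{b_1}^2\cdots z_{b_{m_2-1}}^2\,z_{b_{m_2}}z_{b_{m_2+1}}\cdots z_{b_{m_2+m_1+1}}. \] *)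

theory Defs
  imports Main
begin

text \<open>Polynomial identities in the indeterminates z_1..z_n are rendered as identities
of their evaluations at an arbitrary point z :: nat => 'a of an arbitrary commutative ring
(only the values z 1, ..., z n matter).\<close>

definition esym_excl :: "nat \<Rightarrow> nat \<Rightarrow> nat \<Rightarrow> nat \<Rightarrow> (nat \<Rightarrow> 'a::comm_ring_1) \<Rightarrow> 'a" where
  "esym_excl n i j m z =
     (\<Sum>S\<in>{S. S \<subseteq> {1..n} - {i, j} \<and> card S = m}. \<Prod>l\<in>S. z l)"

definition E_entry :: "nat \<Rightarrow> nat \<Rightarrow> nat \<Rightarrow> (nat \<Rightarrow> 'a::comm_ring_1) \<Rightarrow> 'a" where
  "E_entry n r s z =
     of_nat (fact (r - 1) * fact (s - 1)) *
     (\<Sum>i\<in>{1..n}. \<Sum>j\<in>{i<..n}.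
        esym_excl n i j (r - 1) z * esym_excl n i j (s - 1) z * (z i - z j)^2)"

text \<open>N-tuples (b_1,...,b_N) of pairwise distinct elements of {1..n}, as lists
(b_p is the list entry at index p-1).\<close>
definition dtuples :: "nat \<Rightarrow> nat \<Rightarrow> nat list set" where
  "dtuples N n = {bs. length bs = N \<and> distinct bs \<and> set bs \<subseteq> {1..n}}"

definition M_poly :: "nat \<Rightarrow> nat \<Rightarrow> nat \<Rightarrow> (nat \<Rightarrow> 'a::comm_ring_1) \<Rightarrow> 'a" where
  "M_poly m2 m1 n z =
     (\<Sum>bs\<in>dtuples (m1 + m2 + 1) n.
        (\<Prod>p<m2. z (bs ! p) ^ 2) * (\<Prod>p\<in>{m2..<m2 + m1}. z (bs ! p)))
   - (\<Sum>bs\<in>dtuples (m1 + m2 + 1) n.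
        (\<Prod>p<m2 - 1. z (bs ! p) ^ 2) * (\<Prod>p\<in>{m2 - 1..<m2 + m1 + 1}. z (bs ! p)))"

end

theory Submission
  imports Defs
begin



definition Pairs :: "nat set \<Rightarrow> nat \<Rightarrow> nat \<Rightarrow> (nat set \<times> nat set) set" where
  "Pairs V a c = {p. fst p \<subseteq> V \<and> snd p \<subseteq> V \<and> fst p \<inter> snd p = {} \<and> card (fst p) = a \<and> card (snd p) = c}"

definition wt :: "(nat \<Rightarrow> 'a::comm_ring_1) \<Rightarrow> nat set \<times> nat set \<Rightarrow> 'a" where
  "wt z p = (\<Prod>l\<in>fst p. z l ^ 2) * (\<Prod>l\<in>snd p. z l)"

lemma finite_Pairs: "finite V \<Longrightarrow> finite (Pairs V a c)"
proof -
  assume "finite V"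
  have "Pairs V a c \<subseteq> Pow V \<times> Pow V" by (auto simp: Pairs_def)
  then show ?thesis using \<open>finite V\<close> by (meson finite_Pow_iff finite_SigmaI finite_subset)
qed

lemma sum_fibres:
  assumes "finite X" "finite Y" "\<phi> ` X \<subseteq> Y"
  shows "(\<Sum>x\<in>X. g (\<phi> x)) = (\<Sum>y\<in>Y. of_nat (card {x\<in>X. \<phi> x = y}) * (g y :: 'a::comm_ring_1))"
proof -
  have "(\<Sum>x\<in>X. g (\<phi> x)) = (\<Sum>y\<in>Y. \<Sum>x\<in>{x\<in>X. \<phi> x = y}. g (\<phi> x))"
    using sum.group[OF assms, of "\<lambda>x. g (\<phi> x)"] by simp
  also have "\<dots> = (\<Sum>y\<in>Y. \<Sum>x\<in>{x\<in>X. \<phi> x = y}. g y)"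
    by (intro sum.cong) auto
  also have "\<dots> = (\<Sum>y\<in>Y. of_nat (card {x\<in>X. \<phi> x = y}) * g y)"
    by simp
  finally show ?thesis .
qed

lemma sum_rem:
  assumes "finite V"
  shows "(\<Sum>j\<in>V. \<Sum>p\<in>Pairs (V - {j}) t c. f p) = of_nat (card V - t - c) * (\<Sum>p\<in>Pairs V t c. (f p :: 'a::comm_ring_1))"
proof -
  have "(\<Sum>j\<in>V. \<Sum>p\<in>Pairs (V - {j}) t c. f p) = (\<Sum>j\<in>V. \<Sum>p\<in>{p\<in>Pairs V t c. j \<notin> fst p \<and> j \<notin> snd p}. f p)"
  proof (intro sum.cong refl)
    fix j assume "j \<in> V"
    then show "Pairs (V - {j}) t c = {p\<in>Pairs V t c. j \<notin> fst p \<and> j \<notin> snd p}"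
      by (auto simp: Pairs_def)
  qed
  also have "\<dots> = (\<Sum>p\<in>Pairs V t c. \<Sum>j\<in>{j\<in>V. j \<notin> fst p \<and> j \<notin> snd p}. f p)"
    by (rule sum.swap_restrict) (simp_all add: assms finite_Pairs)
  also have "\<dots> = (\<Sum>p\<in>Pairs V t c. of_nat (card V - t - c) * f p)"
  proof (rule sum.cong)
    fix p assume p: "p \<in> Pairs V t c"
    have e: "{j\<in>V. j \<notin> fst p \<and> j \<notin> snd p} = V - (fst p \<union> snd p)" by auto
    have sub: "fst p \<union> snd p \<subseteq> V" using p by (auto simp: Pairs_def)
    have fin: "finite (fst p)" "finite (snd p)" using sub assms by (auto intro: finite_subset)
    have "card (fst p \<union> snd p) = t + c" using p fin by (auto simp: Pairs_def card_Un_disjoint)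
    then have "card {j\<in>V. j \<notin> fst p \<and> j \<notin> snd p} = card V - t - c"
      unfolding e using sub assms card_Diff_subset[OF finite_subset[OF sub assms]] by simp
    then show "(\<Sum>j\<in>{j\<in>V. j \<notin> fst p \<and> j \<notin> snd p}. f p) = of_nat (card V - t - c) * f p" by simp
  qed simp
  also have "\<dots> = of_nat (card V - t - c) * (\<Sum>p\<in>Pairs V t c. f p)"
    by (simp add: sum_distrib_left)
  finally show ?thesis .
qed

lemma sum_addA:
  assumes "finite V"
  shows "(\<Sum>i\<in>V. \<Sum>p\<in>Pairs (V - {i}) t c. f (insert i (fst p), snd p)) = of_nat (t + 1) * (\<Sum>p\<in>Pairs V (t + 1) c. (f p :: 'a::comm_ring_1))"
proof -
  have "(\<Sum>i\<in>V. \<Sum>p\<in>Pairs (V - {i}) t c. f (insert i (fst p), snd p)) = (\<Sum>i\<in>V. \<Sum>p\<in>{p\<in>Pairs V (t+1) c. i \<in> fst p}. f p)"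
  proof (rule sum.cong[OF refl])
    fix i assume i: "i \<in> V"
    show "(\<Sum>p\<in>Pairs (V - {i}) t c. f (insert i (fst p), snd p)) = (\<Sum>p\<in>{p\<in>Pairs V (t+1) c. i \<in> fst p}. f p)"
    proof (rule sum.reindex_bij_witness[where i = "\<lambda>p. (fst p - {i}, snd p)" and j = "\<lambda>p. (insert i (fst p), snd p)"])
      fix p assume "p \<in> {p\<in>Pairs V (t+1) c. i \<in> fst p}"
      then show "(insert i (fst (fst p - {i}, snd p)), snd (fst p - {i}, snd p)) = p" by (simp add: insert_absorb)
    next
      fix p assume p: "p \<in> {p\<in>Pairs V (t+1) c. i \<in> fst p}"
      then have "finite (fst p)" using assms by (auto simp: Pairs_def intro: finite_subset)
      then show "(fst p - {i}, snd p) \<in> Pairs (V - {i}) t c" using p by (auto simp: Pairs_def)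
    next
      fix p assume p: "p \<in> Pairs (V - {i}) t c"
      then show "(fst (insert i (fst p), snd p) - {i}, snd (insert i (fst p), snd p)) = p" 
        by (cases p) (auto simp: Pairs_def)
    next
      fix p assume p: "p \<in> Pairs (V - {i}) t c"
      then have "finite (fst p)" using assms by (auto simp: Pairs_def intro: finite_subset)
      moreover have "i \<notin> fst p" using p by (auto simp: Pairs_def)
      ultimately show "(insert i (fst p), snd p) \<in> {p\<in>Pairs V (t+1) c. i \<in> fst p}" using p i by (auto simp: Pairs_def)
    qed simp
  qed
  also have "\<dots> = (\<Sum>p\<in>Pairs V (t+1) c. \<Sum>i\<in>{i\<in>V. i \<in> fst p}. f p)"
    by (rule sum.swap_restrict) (simp_all add: assms finite_Pairs)
  also have "\<dots> = (\<Sum>p\<in>Pairs V (t+1) c. of_nat (t + 1) * f p)"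
  proof (rule sum.cong)
    fix p assume p: "p \<in> Pairs V (t+1) c"
    then have "{i\<in>V. i \<in> fst p} = fst p" by (auto simp: Pairs_def)
    then show "(\<Sum>i\<in>{i\<in>V. i \<in> fst p}. f p) = of_nat (t + 1) * f p" using p by (simp add: Pairs_def)
  qed simp
  also have "\<dots> = of_nat (t + 1) * (\<Sum>p\<in>Pairs V (t+1) c. f p)"
    by (simp add: sum_distrib_left)
  finally show ?thesis .
qed

lemma sum_addC:
  assumes "finite V"
  shows "(\<Sum>i\<in>V. \<Sum>p\<in>Pairs (V - {i}) t c. f (fst p, insert i (snd p))) = of_nat (c + 1) * (\<Sum>p\<in>Pairs V t (c + 1). (f p :: 'a::comm_ring_1))"
proof -
  have "(\<Sum>i\<in>V. \<Sum>p\<in>Pairs (V - {i}) t c. f (fst p, insert i (snd p))) = (\<Sum>i\<in>V. \<Sum>p\<in>{p\<in>Pairs V t (c+1). i \<in> snd p}. f p)"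
  proof (rule sum.cong[OF refl])
    fix i assume i: "i \<in> V"
    show "(\<Sum>p\<in>Pairs (V - {i}) t c. f (fst p, insert i (snd p))) = (\<Sum>p\<in>{p\<in>Pairs V t (c+1). i \<in> snd p}. f p)"
    proof (rule sum.reindex_bij_witness[where i = "\<lambda>p. (fst p, snd p - {i})" and j = "\<lambda>p. (fst p, insert i (snd p))"])
      fix p assume "p \<in> {p\<in>Pairs V t (c+1). i \<in> snd p}"
      then show "(fst (fst p, snd p - {i}), insert i (snd (fst p, snd p - {i}))) = p" by (simp add: insert_absorb)
    next
      fix p assume p: "p \<in> {p\<in>Pairs V t (c+1). i \<in> snd p}"
      then have "finite (snd p)" using assms by (auto simp: Pairs_def intro: finite_subset)
      then show "(fst p, snd p - {i}) \<in> Pairs (V - {i}) t c" using p by (auto simp: Pairs_def)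
    next
      fix p assume p: "p \<in> Pairs (V - {i}) t c"
      then show "(fst (fst p, insert i (snd p)), snd (fst p, insert i (snd p)) - {i}) = p" 
        by (cases p) (auto simp: Pairs_def)
    next
      fix p assume p: "p \<in> Pairs (V - {i}) t c"
      then have "finite (snd p)" using assms by (auto simp: Pairs_def intro: finite_subset)
      moreover have "i \<notin> snd p" using p by (auto simp: Pairs_def)
      ultimately show "(fst p, insert i (snd p)) \<in> {p\<in>Pairs V t (c+1). i \<in> snd p}" using p i by (auto simp: Pairs_def)
    qed simp
  qed
  also have "\<dots> = (\<Sum>p\<in>Pairs V t (c+1). \<Sum>i\<in>{i\<in>V. i \<in> snd p}. f p)"
    by (rule sum.swap_restrict) (simp_all add: assms finite_Pairs)
  also have "\<dots> = (\<Sum>p\<in>Pairs V t (c+1). of_nat (c + 1) * f p)"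
  proof (rule sum.cong)
    fix p assume p: "p \<in> Pairs V t (c+1)"
    then have "{i\<in>V. i \<in> snd p} = snd p" by (auto simp: Pairs_def)
    then show "(\<Sum>i\<in>{i\<in>V. i \<in> snd p}. f p) = of_nat (c + 1) * f p" using p by (simp add: Pairs_def)
  qed simp
  also have "\<dots> = of_nat (c + 1) * (\<Sum>p\<in>Pairs V t (c+1). f p)"
    by (simp add: sum_distrib_left)
  finally show ?thesis .
qed




definition Sub :: "nat set \<Rightarrow> nat \<Rightarrow> nat set set" where
  "Sub V r = {S. S \<subseteq> V \<and> card S = r}"

lemma finite_Sub: "finite V \<Longrightarrow> finite (Sub V r)"
  unfolding Sub_def by (rule finite_subset[of _ "Pow V"]) auto

lemma Pairs_disj: "i \<noteq> j \<Longrightarrow> Pairs V i c \<inter> Pairs V j d = {}"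
  by (auto simp: Pairs_def)

lemma prod_mult_sets:
  assumes "finite S" "finite T"
  shows "(\<Prod>l\<in>S. z l) * (\<Prod>l\<in>T. z l) = wt z (S \<inter> T, (S - T) \<union> (T - S))"
proof -
  have 1: "(\<Prod>l\<in>S. z l) = (\<Prod>l\<in>S \<inter> T. z l) * (\<Prod>l\<in>S - T. z l)"
    using prod.Int_Diff[OF assms(1)] by blast
  have 2: "(\<Prod>l\<in>T. z l) = (\<Prod>l\<in>S \<inter> T. z l) * (\<Prod>l\<in>T - S. z l)"
    using prod.Int_Diff[OF assms(2), of z S] by (simp add: Int_commute)
  have 3: "(\<Prod>l\<in>(S - T) \<union> (T - S). z l) = (\<Prod>l\<in>S - T. z l) * (\<Prod>l\<in>T - S. z l)"
    by (rule prod.union_disjoint) (use assms in auto)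
  have 4: "(\<Prod>l\<in>S \<inter> T. z l ^ 2) = (\<Prod>l\<in>S \<inter> T. z l) ^ 2"
    by (simp add: prod_power_distrib)
  show ?thesis unfolding wt_def fst_conv snd_conv 1 2 3 4 by (simp add: power2_eq_square ac_simps)
qed

lemma fibre_card_ST:
  assumes V: "finite V" and tr: "t \<le> r" and rs: "r \<le> s"
    and y: "(A, C) \<in> Pairs V t (r + s - 2 * t)"
  shows "card {x \<in> Sub V r \<times> Sub V s. (fst x \<inter> snd x, (fst x - snd x) \<union> (snd x - fst x)) = (A, C)}
       = (r + s - 2 * t) choose (r - t)"
proof -
  have yA: "A \<subseteq> V" "C \<subseteq> V" "A \<inter> C = {}" "card A = t" "card C = r + s - 2 * t"
    using y by (auto simp: Pairs_def)
  have fA: "finite A" "finite C" using yA V by (auto intro: finite_subset)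
  let ?F = "{x \<in> Sub V r \<times> Sub V s. (fst x \<inter> snd x, (fst x - snd x) \<union> (snd x - fst x)) = (A, C)}"
  have "bij_betw (\<lambda>B. (A \<union> B, A \<union> (C - B))) (Sub C (r - t)) ?F"
  proof (rule bij_betw_byWitness[where f' = "\<lambda>x. fst x - snd x"])
    show "\<forall>B\<in>Sub C (r - t). fst (A \<union> B, A \<union> (C - B)) - snd (A \<union> B, A \<union> (C - B)) = B"
      using yA by (auto simp: Sub_def)
    show "\<forall>x\<in>?F. (A \<union> (fst x - snd x), A \<union> (C - (fst x - snd x))) = x"
    proof
      fix x assume x: "x \<in> ?F"
      obtain S T where xST: "x = (S, T)" by (cases x)
      have "S \<inter> T = A" "(S - T) \<union> (T - S) = C" using x xST by auto
      then have "A \<union> (S - T) = S" "A \<union> (C - (S - T)) = T" by auto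
      then show "(A \<union> (fst x - snd x), A \<union> (C - (fst x - snd x))) = x" using xST by simp
    qed
    show "(\<lambda>B. (A \<union> B, A \<union> (C - B))) ` Sub C (r - t) \<subseteq> ?F"
    proof
      fix x assume "x \<in> (\<lambda>B. (A \<union> B, A \<union> (C - B))) ` Sub C (r - t)"
      then obtain B where B: "B \<subseteq> C" "card B = r - t" and x: "x = (A \<union> B, A \<union> (C - B))"
        by (auto simp: Sub_def)
      have fB: "finite B" using B fA by (auto intro: finite_subset)
      have dAB: "A \<inter> B = {}" "A \<inter> (C - B) = {}" using B yA by auto
      have c1: "card (A \<union> B) = r" using card_Un_disjoint[OF fA(1) fB dAB(1)] yA B tr by simp
      have "card (C - B) = r + s - 2 * t - (r - t)" using card_Diff_subset[OF fB B(1)] yA B by simp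
      then have c2: "card (A \<union> (C - B)) = s"
        using card_Un_disjoint[of A "C - B"] fA dAB yA tr rs by simp
      have "(A \<union> B) \<inter> (A \<union> (C - B)) = A" using B yA by auto
      moreover have "((A \<union> B) - (A \<union> (C - B))) \<union> ((A \<union> (C - B)) - (A \<union> B)) = C" using B yA by auto
      ultimately show "x \<in> ?F" using x c1 c2 B yA by (auto simp: Sub_def)
    qed
    show "(\<lambda>x. fst x - snd x) ` ?F \<subseteq> Sub C (r - t)"
    proof
      fix B assume "B \<in> (\<lambda>x. fst x - snd x) ` ?F"
      then obtain S T where ST: "S \<in> Sub V r" "T \<in> Sub V s" "S \<inter> T = A" "(S - T) \<union> (T - S) = C"
        and B: "B = S - T" by auto
      have fS: "finite S" using ST V by (auto simp: Sub_def intro: finite_subset)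
      have "card (S - T) = card S - card (S \<inter> T)" by (rule card_Diff_subset_Int) (use fS in auto)
      then show "B \<in> Sub C (r - t)" using ST B yA by (auto simp: Sub_def)
    qed
  qed
  then have "card (Sub C (r - t)) = card ?F" by (rule bij_betw_same_card)
  then have "card ?F = card (Sub C (r - t))" by simp
  also have "\<dots> = (r + s - 2 * t) choose (r - t)" unfolding Sub_def using n_subsets[OF fA(2)] yA by simp
  finally show ?thesis .
qed

lemma prod_esym:
  assumes V: "finite V" and rs: "r \<le> s"
  shows "(\<Sum>S\<in>Sub V r. \<Prod>l\<in>S. z l) * (\<Sum>T\<in>Sub V s. \<Prod>l\<in>T. z l)
     = (\<Sum>t = 0..r. of_nat ((r + s - 2 * t) choose (r - t)) * (\<Sum>p\<in>Pairs V t (r + s - 2 * t). wt z p))"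
proof -
  let ?X = "Sub V r \<times> Sub V s"
  let ?phi = "\<lambda>x. (fst x \<inter> snd x, (fst x - snd x) \<union> (snd x - fst x))"
  let ?Y = "\<Union>t\<in>{0..r}. Pairs V t (r + s - 2 * t)"
  have fX: "finite ?X" using finite_Sub[OF V] by simp
  have fY: "finite ?Y" using finite_Pairs[OF V] by simp
  have "(\<Sum>S\<in>Sub V r. \<Prod>l\<in>S. z l) * (\<Sum>T\<in>Sub V s. \<Prod>l\<in>T. z l) = (\<Sum>x\<in>?X. (\<Prod>l\<in>fst x. z l) * (\<Prod>l\<in>snd x. z l))"
    by (simp add: sum_product sum.cartesian_product case_prod_beta)
  also have "\<dots> = (\<Sum>x\<in>?X. wt z (?phi x))"
  proof (rule sum.cong[OF refl])
    fix x assume "x \<in> ?X"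
    then have "finite (fst x)" "finite (snd x)" using V by (auto simp: Sub_def dest: finite_subset)
    then show "(\<Prod>l\<in>fst x. z l) * (\<Prod>l\<in>snd x. z l) = wt z (?phi x)" by (rule prod_mult_sets)
  qed
  also have "\<dots> = (\<Sum>y\<in>?Y. of_nat (card {x\<in>?X. ?phi x = y}) * wt z y)"
  proof (rule sum_fibres[OF fX fY])
    show "?phi ` ?X \<subseteq> ?Y"
    proof
      fix y assume "y \<in> ?phi ` ?X"
      then obtain S T where ST: "S \<in> Sub V r" "T \<in> Sub V s" and y: "y = ?phi (S, T)" by auto
      have fS: "finite S" "finite T" using ST V by (auto simp: Sub_def intro: finite_subset)
      have t: "card (S \<inter> T) \<le> r" using ST fS by (auto simp: Sub_def intro: card_mono)
      have ts: "card (S \<inter> T) \<le> s" using ST fS by (auto simp: Sub_def intro: card_mono)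
      have c1: "card (S - T) = r - card (S \<inter> T)" using card_Diff_subset_Int[of S T] fS ST by (simp add: Sub_def)
      have c2: "card (T - S) = s - card (S \<inter> T)" using card_Diff_subset_Int[of T S] fS ST by (simp add: Sub_def Int_commute)
      have "card ((S - T) \<union> (T - S)) = card (S - T) + card (T - S)"
        by (rule card_Un_disjoint) (use fS in auto)
      then have "card ((S - T) \<union> (T - S)) = r + s - 2 * card (S \<inter> T)" using c1 c2 t ts by simp
      then have "y \<in> Pairs V (card (S \<inter> T)) (r + s - 2 * card (S \<inter> T))"
        using y ST by (auto simp: Pairs_def Sub_def)
      then show "y \<in> ?Y" using t by auto
    qed
  qed
  also have "\<dots> = (\<Sum>t = 0..r. \<Sum>y\<in>Pairs V t (r + s - 2 * t). of_nat (card {x\<in>?X. ?phi x = y}) * wt z y)"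
    by (rule sum.UNION_disjoint) (simp_all add: finite_Pairs V Pairs_disj)
  also have "\<dots> = (\<Sum>t = 0..r. of_nat ((r + s - 2 * t) choose (r - t)) * (\<Sum>p\<in>Pairs V t (r + s - 2 * t). wt z p))"
  proof (rule sum.cong[OF refl])
    fix t assume t: "t \<in> {0..r}"
    have "(\<Sum>y\<in>Pairs V t (r + s - 2 * t). of_nat (card {x\<in>?X. ?phi x = y}) * wt z y)
       = (\<Sum>y\<in>Pairs V t (r + s - 2 * t). of_nat ((r + s - 2 * t) choose (r - t)) * wt z y)"
    proof (rule sum.cong[OF refl])
      fix y assume y: "y \<in> Pairs V t (r + s - 2 * t)"
      obtain A C where yAC: "y = (A, C)" by (cases y)
      show "of_nat (card {x\<in>?X. ?phi x = y}) * wt z y = of_nat ((r + s - 2 * t) choose (r - t)) * wt z y"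
        using fibre_card_ST[OF V _ rs, of t A C] t y yAC by simp
    qed
    then show "(\<Sum>y\<in>Pairs V t (r + s - 2 * t). of_nat (card {x\<in>?X. ?phi x = y}) * wt z y)
       = of_nat ((r + s - 2 * t) choose (r - t)) * (\<Sum>p\<in>Pairs V t (r + s - 2 * t). wt z p)"
      by (simp add: sum_distrib_left)
  qed
  finally show ?thesis .
qed




lemma set_take_drop_img:
  assumes "a + c \<le> length bs"
  shows "set (take c (drop a bs)) = (\<lambda>p. bs ! p) ` {a..<a+c}"
proof
  show "set (take c (drop a bs)) \<subseteq> (\<lambda>p. bs ! p) ` {a..<a+c}"
  proof
    fix x assume "x \<in> set (take c (drop a bs))"
    then obtain i where i: "i < length (take c (drop a bs))" "x = take c (drop a bs) ! i"
      by (auto simp: in_set_conv_nth)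
    then have "i < c" "x = bs ! (a + i)" using assms by auto
    then show "x \<in> (\<lambda>p. bs ! p) ` {a..<a+c}" by (intro image_eqI[of _ _ "a + i"]) auto
  qed
  show "(\<lambda>p. bs ! p) ` {a..<a+c} \<subseteq> set (take c (drop a bs))"
  proof
    fix x assume "x \<in> (\<lambda>p. bs ! p) ` {a..<a+c}"
    then obtain p where p: "a \<le> p" "p < a + c" "x = bs ! p" by auto
    then have "x = take c (drop a bs) ! (p - a)" "p - a < length (take c (drop a bs))" using assms by auto
    then show "x \<in> set (take c (drop a bs))" by (metis nth_mem)
  qed
qed

lemma prod_nth_set:
  assumes "distinct bs" "a + c \<le> length bs"
  shows "(\<Prod>p\<in>{a..<a+c}. f (bs ! p)) = (\<Prod>x\<in>set (take c (drop a bs)). f x)"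
proof -
  have inj: "inj_on (\<lambda>p. bs ! p) {a..<a+c}"
    by (rule inj_on_nth) (use assms in auto)
  show ?thesis unfolding set_take_drop_img[OF assms(2)] prod.reindex[OF inj] by simp
qed

lemma prod_nth_set0:
  assumes "distinct bs" "a \<le> length bs"
  shows "(\<Prod>p<a. f (bs ! p)) = (\<Prod>x\<in>set (take a bs). f x)"
proof -
  have "{..<a} = {0..<0+a}" by auto
  then show ?thesis using prod_nth_set[OF assms(1), of 0 a f] assms(2) by simp
qed

lemma card_perms:
  assumes "finite A"
  shows "card {xs. distinct xs \<and> set xs = A} = fact (card A)"
proof -
  have "{xs. distinct xs \<and> set xs = A} = {xs. length xs = card A \<and> distinct xs \<and> set xs \<subseteq> A}"
  proof (intro set_eqI iffI)
    fix xs assume "xs \<in> {xs. distinct xs \<and> set xs = A}"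
    then show "xs \<in> {xs. length xs = card A \<and> distinct xs \<and> set xs \<subseteq> A}" by (auto simp: distinct_card)
  next
    fix xs assume xs: "xs \<in> {xs. length xs = card A \<and> distinct xs \<and> set xs \<subseteq> A}"
    then have "card (set xs) = card A" by (simp add: distinct_card)
    then have "set xs = A" using xs card_subset_eq[OF assms, of "set xs"] by simp
    then show "xs \<in> {xs. distinct xs \<and> set xs = A}" using xs by simp
  qed
  also have "card \<dots> = \<Prod>{card A - card A + 1 .. card A}"
    by (rule card_lists_distinct_length_eq) (use assms in auto)
  also have "\<dots> = fact (card A)" by (simp add: fact_prod)
  finally show ?thesis .
qed

lemma card_W:
  assumes "finite R" "e \<le> 1"
  shows "card {ws. length ws = e \<and> distinct ws \<and> set ws \<subseteq> R} = card R ^ e"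
proof (cases "e = 0")
  case True
  then have "{ws. length ws = e \<and> distinct ws \<and> set ws \<subseteq> R} = {[]}" by auto
  then show ?thesis using True by simp
next
  case False
  then have e: "e = 1" using assms by simp
  have "{ws. length ws = e \<and> distinct ws \<and> set ws \<subseteq> R} = (\<lambda>x. [x]) ` R"
    using e by (auto simp: length_Suc_conv)
  moreover have "inj_on (\<lambda>x. [x]) R" by (auto intro: inj_onI)
  ultimately show ?thesis using e by (simp add: card_image)
qed

lemma finite_dtuples: "finite (dtuples N n)"
proof -
  have "dtuples N n \<subseteq> {xs. set xs \<subseteq> {1..n} \<and> length xs = N}" by (auto simp: dtuples_def)
  then show ?thesis using finite_lists_length_eq[of "{1..n}" N] by (auto intro: finite_subset)
qed

lemma fibre_card_tup:
  assumes e: "e \<le> 1" and y: "(A, C) \<in> Pairs {1..n} a c"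
  shows "card {bs \<in> dtuples (a + c + e) n. (set (take a bs), set (take c (drop a bs))) = (A, C)}
       = fact a * fact c * (n - a - c) ^ e"
proof -
  let ?U = "{1..n::nat}"
  let ?F = "{bs \<in> dtuples (a + c + e) n. (set (take a bs), set (take c (drop a bs))) = (A, C)}"
  let ?PA = "{xs. distinct xs \<and> set xs = A}"
  let ?PC = "{xs. distinct xs \<and> set xs = C}"
  let ?W = "{ws. length ws = e \<and> distinct ws \<and> set ws \<subseteq> ?U - (A \<union> C)}"
  have yA: "A \<subseteq> ?U" "C \<subseteq> ?U" "A \<inter> C = {}" "card A = a" "card C = c"
    using y by (auto simp: Pairs_def)
  have fA: "finite A" "finite C" using yA by (auto intro: finite_subset)
  have "bij_betw (\<lambda>(xs, ys, ws). xs @ ys @ ws) (?PA \<times> ?PC \<times> ?W) ?F"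
  proof (rule bij_betw_byWitness[where f' = "\<lambda>bs. (take a bs, take c (drop a bs), drop (a + c) bs)"])
    show "\<forall>x\<in>?PA \<times> ?PC \<times> ?W. (\<lambda>bs. (take a bs, take c (drop a bs), drop (a + c) bs)) ((\<lambda>(xs, ys, ws). xs @ ys @ ws) x) = x"
    proof
      fix x assume x: "x \<in> ?PA \<times> ?PC \<times> ?W"
      obtain xs ys ws where xx: "x = (xs, ys, ws)" by (cases x)
      have "length xs = a" "length ys = c" using x xx yA by (auto simp: distinct_card[symmetric])
      then show "(\<lambda>bs. (take a bs, take c (drop a bs), drop (a + c) bs)) ((\<lambda>(xs, ys, ws). xs @ ys @ ws) x) = x"
        using xx by simp
    qed
    show "\<forall>bs\<in>?F. (\<lambda>(xs, ys, ws). xs @ ys @ ws) (take a bs, take c (drop a bs), drop (a + c) bs) = bs"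
    proof
      fix bs assume "bs \<in> ?F"
      have "take c (drop a bs) @ drop (a + c) bs = drop a bs"
        by (metis append_take_drop_id drop_drop add.commute)
      then show "(\<lambda>(xs, ys, ws). xs @ ys @ ws) (take a bs, take c (drop a bs), drop (a + c) bs) = bs"
        by simp
    qed
    show "(\<lambda>(xs, ys, ws). xs @ ys @ ws) ` (?PA \<times> ?PC \<times> ?W) \<subseteq> ?F"
    proof
      fix bs assume "bs \<in> (\<lambda>(xs, ys, ws). xs @ ys @ ws) ` (?PA \<times> ?PC \<times> ?W)"
      then obtain xs ys ws where xs: "xs \<in> ?PA" "ys \<in> ?PC" "ws \<in> ?W" and bs: "bs = xs @ ys @ ws" by auto
      have l: "length xs = a" "length ys = c" using xs yA by (auto simp: distinct_card[symmetric])
      have "distinct bs" using xs yA bs by auto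
      moreover have "set bs \<subseteq> ?U" using xs yA bs by auto
      moreover have "length bs = a + c + e" using l xs bs by simp
      moreover have "take a bs = xs" "take c (drop a bs) = ys" using l bs by auto
      ultimately show "bs \<in> ?F" using xs by (auto simp: dtuples_def)
    qed
    show "(\<lambda>bs. (take a bs, take c (drop a bs), drop (a + c) bs)) ` ?F \<subseteq> ?PA \<times> ?PC \<times> ?W"
    proof
      fix x assume "x \<in> (\<lambda>bs. (take a bs, take c (drop a bs), drop (a + c) bs)) ` ?F"
      then obtain bs where bs: "bs \<in> ?F" and x: "x = (take a bs, take c (drop a bs), drop (a + c) bs)" by auto
      have d: "distinct bs" "length bs = a + c + e" "set bs \<subseteq> ?U" using bs by (auto simp: dtuples_def)
      have s: "set (take a bs) = A" "set (take c (drop a bs)) = C" using bs by auto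
      have split: "bs = take a bs @ take c (drop a bs) @ drop (a + c) bs"
        by (metis append_take_drop_id drop_drop add.commute)
      have "distinct (take a bs @ take c (drop a bs) @ drop (a + c) bs)" using d split by metis
      then have dd: "distinct (take a bs)" "distinct (take c (drop a bs))" "distinct (drop (a + c) bs)"
        "set (drop (a + c) bs) \<inter> (A \<union> C) = {}"
        using s by auto
      have "set (drop (a + c) bs) \<subseteq> ?U" using d(3) by (meson order_trans set_drop_subset)
      then have "drop (a + c) bs \<in> ?W" using dd d(2) by auto
      then show "x \<in> ?PA \<times> ?PC \<times> ?W" using x dd s by auto
    qed
  qed
  then have "card (?PA \<times> ?PC \<times> ?W) = card ?F" by (rule bij_betw_same_card)
  then have "card ?F = card (?PA \<times> ?PC \<times> ?W)" by simp
  also have "\<dots> = card ?PA * (card ?PC * card ?W)" by (simp add: card_cartesian_product)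
  also have "card ?PA = fact a" using card_perms[OF fA(1)] yA by simp
  also have "card ?PC = fact c" using card_perms[OF fA(2)] yA by simp
  also have "card ?W = card (?U - (A \<union> C)) ^ e" by (rule card_W) (use e in auto)
  also have "card (?U - (A \<union> C)) = n - a - c"
  proof -
    have "card (A \<union> C) = a + c" using card_Un_disjoint[OF fA yA(3)] yA by simp
    then show ?thesis using card_Diff_subset[of "A \<union> C" ?U] yA fA by simp
  qed
  finally show ?thesis by simp
qed

lemma tuple_sum:
  fixes z :: "nat \<Rightarrow> 'a::comm_ring_1"
  assumes e: "e \<le> 1"
  shows "(\<Sum>bs\<in>dtuples (a + c + e) n. (\<Prod>p<a. z (bs ! p) ^ 2) * (\<Prod>p\<in>{a..<a + c}. z (bs ! p)))
    = of_nat (fact a * fact c * (n - a - c) ^ e) * (\<Sum>p\<in>Pairs {1..n} a c. wt z p)"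
proof -
  let ?phi = "\<lambda>bs. (set (take a bs), set (take c (drop a bs)))"
  have "(\<Sum>bs\<in>dtuples (a + c + e) n. (\<Prod>p<a. z (bs ! p) ^ 2) * (\<Prod>p\<in>{a..<a + c}. z (bs ! p)))
      = (\<Sum>bs\<in>dtuples (a + c + e) n. wt z (?phi bs))"
  proof (rule sum.cong[OF refl])
    fix bs assume "bs \<in> dtuples (a + c + e) n"
    then have d: "distinct bs" "length bs = a + c + e" by (auto simp: dtuples_def)
    show "(\<Prod>p<a. z (bs ! p) ^ 2) * (\<Prod>p\<in>{a..<a + c}. z (bs ! p)) = wt z (?phi bs)"
      unfolding wt_def using prod_nth_set0[OF d(1), of a "\<lambda>x. z x ^ 2"] prod_nth_set[OF d(1), of a c z] d(2)
      by simp
  qed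
  also have "\<dots> = (\<Sum>y\<in>Pairs {1..n} a c. of_nat (card {bs\<in>dtuples (a + c + e) n. ?phi bs = y}) * wt z y)"
  proof (rule sum_fibres[OF finite_dtuples finite_Pairs])
    show "finite {1..n}" by simp
    show "?phi ` dtuples (a + c + e) n \<subseteq> Pairs {1..n} a c"
    proof
      fix y assume "y \<in> ?phi ` dtuples (a + c + e) n"
      then obtain bs where bs: "bs \<in> dtuples (a + c + e) n" and y: "y = ?phi bs" by auto
      have d: "distinct bs" "length bs = a + c + e" "set bs \<subseteq> {1..n}" using bs by (auto simp: dtuples_def)
      have split: "bs = take a bs @ take c (drop a bs) @ drop (a + c) bs"
        by (metis append_take_drop_id drop_drop add.commute)
      have "distinct (take a bs @ take c (drop a bs) @ drop (a + c) bs)" using d split by metis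
      then have dd: "distinct (take a bs)" "distinct (take c (drop a bs))"
        "set (take a bs) \<inter> set (take c (drop a bs)) = {}" by auto
      have "set (take a bs) \<subseteq> {1..n}" "set (take c (drop a bs)) \<subseteq> {1..n}"
        using d(3) by (meson order_trans set_take_subset set_drop_subset)+
      moreover have "card (set (take a bs)) = a" "card (set (take c (drop a bs))) = c"
        using dd d(2) by (auto simp: distinct_card)
      ultimately show "y \<in> Pairs {1..n} a c" using y dd by (auto simp: Pairs_def)
    qed
  qed
  also have "\<dots> = (\<Sum>y\<in>Pairs {1..n} a c. of_nat (fact a * fact c * (n - a - c) ^ e) * wt z y)"
  proof (rule sum.cong[OF refl])
    fix y assume y: "y \<in> Pairs {1..n} a c"
    obtain A C where yy: "y = (A, C)" by (cases y)
    show "of_nat (card {bs\<in>dtuples (a + c + e) n. ?phi bs = y}) * wt z y = of_nat (fact a * fact c * (n - a - c) ^ e) * wt z y"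
      using fibre_card_tup[OF e, of A C n a c] y yy by simp
  qed
  also have "\<dots> = of_nat (fact a * fact c * (n - a - c) ^ e) * (\<Sum>p\<in>Pairs {1..n} a c. wt z p)"
    by (simp add: sum_distrib_left)
  finally show ?thesis .
qed




lemma sym_split:
  fixes F :: "nat \<Rightarrow> nat \<Rightarrow> 'a::comm_ring_1"
  shows "(\<Sum>i\<in>{1..n}. \<Sum>j\<in>{1..n} - {i}. F i j) = (\<Sum>i\<in>{1..n}. \<Sum>j\<in>{i<..n}. F i j + F j i)"
proof -
  let ?U = "{1..n::nat}"
  have "(\<Sum>i\<in>?U. \<Sum>j\<in>?U - {i}. F i j) = (\<Sum>i\<in>?U. (\<Sum>j\<in>{j\<in>?U. i < j}. F i j) + (\<Sum>j\<in>{j\<in>?U. j < i}. F i j))"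
  proof (rule sum.cong[OF refl])
    fix i assume "i \<in> ?U"
    have e: "?U - {i} = {j\<in>?U. i < j} \<union> {j\<in>?U. j < i}" by auto
    have "(\<Sum>j\<in>?U - {i}. F i j) = (\<Sum>j\<in>{j\<in>?U. i < j} \<union> {j\<in>?U. j < i}. F i j)"
      by (simp only: e)
    also have "\<dots> = (\<Sum>j\<in>{j\<in>?U. i < j}. F i j) + (\<Sum>j\<in>{j\<in>?U. j < i}. F i j)"
      by (rule sum.union_disjoint) auto
    finally show "(\<Sum>j\<in>?U - {i}. F i j) = (\<Sum>j\<in>{j\<in>?U. i < j}. F i j) + (\<Sum>j\<in>{j\<in>?U. j < i}. F i j)" .
  qed
  also have "\<dots> = (\<Sum>i\<in>?U. \<Sum>j\<in>{j\<in>?U. i < j}. F i j) + (\<Sum>i\<in>?U. \<Sum>j\<in>{j\<in>?U. j < i}. F i j)"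
    by (simp add: sum.distrib)
  also have "(\<Sum>i\<in>?U. \<Sum>j\<in>{j\<in>?U. j < i}. F i j) = (\<Sum>j\<in>?U. \<Sum>i\<in>{i\<in>?U. j < i}. F i j)"
    by (rule sum.swap_restrict) auto
  also have "(\<Sum>i\<in>?U. \<Sum>j\<in>{j\<in>?U. i < j}. F i j) + (\<Sum>j\<in>?U. \<Sum>i\<in>{i\<in>?U. j < i}. F i j)
     = (\<Sum>i\<in>?U. \<Sum>j\<in>{j\<in>?U. i < j}. F i j + F j i)"
    by (simp add: sum.distrib)
  also have "\<dots> = (\<Sum>i\<in>?U. \<Sum>j\<in>{i<..n}. F i j + F j i)"
  proof (rule sum.cong[OF refl])
    fix i assume "i \<in> ?U"
    have "{j\<in>?U. i < j} = {i<..n}" by auto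
    then show "(\<Sum>j\<in>{j\<in>?U. i < j}. F i j + F j i) = (\<Sum>j\<in>{i<..n}. F i j + F j i)" by simp
  qed
  finally show ?thesis .
qed

lemma esym_excl_sym: "esym_excl n i j r z = esym_excl n j i r z"
  unfolding esym_excl_def by (simp add: insert_commute)

lemma esym_excl_Sub: "esym_excl n i j r z = (\<Sum>S\<in>Sub ({1..n} - {i} - {j}) r. \<Prod>l\<in>S. z l)"
  unfolding esym_excl_def Sub_def by (simp add: Diff_insert2[symmetric] insert_commute)

lemma wt_sq:
  assumes "finite (fst p)" "i \<notin> fst p"
  shows "wt z p * z i ^ 2 = wt z (insert i (fst p), snd p)"
  using assms unfolding wt_def by (simp add: ac_simps)

lemma wt_lin:
  assumes "finite (snd p)" "i \<notin> snd p" "j \<notin> snd p" "i \<noteq> j"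
  shows "wt z p * (z i * z j) = wt z (fst p, insert i (insert j (snd p)))"
  using assms unfolding wt_def by (simp add: ac_simps)




lemma T1:
  fixes z :: "nat \<Rightarrow> 'a::comm_ring_1"
  shows "(\<Sum>i\<in>{1..n}. \<Sum>j\<in>{1..n} - {i}. (\<Sum>p\<in>Pairs ({1..n} - {i} - {j}) t c. wt z p) * z i ^ 2)
       = of_nat (n - 1 - t - c) * of_nat (t + 1) * (\<Sum>p\<in>Pairs {1..n} (t + 1) c. wt z p)"
proof -
  let ?U = "{1..n::nat}"
  have "(\<Sum>i\<in>?U. \<Sum>j\<in>?U - {i}. (\<Sum>p\<in>Pairs (?U - {i} - {j}) t c. wt z p) * z i ^ 2)
      = (\<Sum>i\<in>?U. \<Sum>j\<in>?U - {i}. \<Sum>p\<in>Pairs (?U - {i} - {j}) t c. wt z (insert i (fst p), snd p))"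
  proof (intro sum.cong refl)
    fix i j assume i: "i \<in> ?U" and j: "j \<in> ?U - {i}"
    have "(\<Sum>p\<in>Pairs (?U - {i} - {j}) t c. wt z p) * z i ^ 2 = (\<Sum>p\<in>Pairs (?U - {i} - {j}) t c. wt z p * z i ^ 2)"
      by (simp add: sum_distrib_right)
    also have "\<dots> = (\<Sum>p\<in>Pairs (?U - {i} - {j}) t c. wt z (insert i (fst p), snd p))"
    proof (rule sum.cong[OF refl])
      fix p assume p: "p \<in> Pairs (?U - {i} - {j}) t c"
      then have "fst p \<subseteq> ?U" "i \<notin> fst p" by (auto simp: Pairs_def)
      then show "wt z p * z i ^ 2 = wt z (insert i (fst p), snd p)"
        by (intro wt_sq) (auto intro: finite_subset)
    qed
    finally show "(\<Sum>p\<in>Pairs (?U - {i} - {j}) t c. wt z p) * z i ^ 2 = (\<Sum>p\<in>Pairs (?U - {i} - {j}) t c. wt z (insert i (fst p), snd p))" .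
  qed
  also have "\<dots> = (\<Sum>i\<in>?U. of_nat (n - 1 - t - c) * (\<Sum>p\<in>Pairs (?U - {i}) t c. wt z (insert i (fst p), snd p)))"
  proof (rule sum.cong[OF refl])
    fix i assume i: "i \<in> ?U"
    have "card (?U - {i}) = n - 1" using i by simp
    then show "(\<Sum>j\<in>?U - {i}. \<Sum>p\<in>Pairs (?U - {i} - {j}) t c. wt z (insert i (fst p), snd p))
        = of_nat (n - 1 - t - c) * (\<Sum>p\<in>Pairs (?U - {i}) t c. wt z (insert i (fst p), snd p))"
      using sum_rem[where V="?U - {i}" and t=t and c=c and f="\<lambda>p. wt z (insert i (fst p), snd p)"] by simp
  qed
  also have "\<dots> = of_nat (n - 1 - t - c) * (\<Sum>i\<in>?U. \<Sum>p\<in>Pairs (?U - {i}) t c. wt z (insert i (fst p), snd p))"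
    by (simp add: sum_distrib_left)
  also have "\<dots> = of_nat (n - 1 - t - c) * (of_nat (t + 1) * (\<Sum>p\<in>Pairs ?U (t + 1) c. wt z p))"
    using sum_addA[where V="?U" and t=t and c=c and f="wt z"] by simp
  finally show ?thesis by (simp add: ac_simps)
qed

lemma T2:
  fixes z :: "nat \<Rightarrow> 'a::comm_ring_1"
  shows "(\<Sum>i\<in>{1..n}. \<Sum>j\<in>{1..n} - {i}. (\<Sum>p\<in>Pairs ({1..n} - {i} - {j}) t c. wt z p) * (z i * z j))
       = of_nat (c + 1) * of_nat (c + 2) * (\<Sum>p\<in>Pairs {1..n} t (c + 2). wt z p)"
proof -
  let ?U = "{1..n::nat}"
  have "(\<Sum>i\<in>?U. \<Sum>j\<in>?U - {i}. (\<Sum>p\<in>Pairs (?U - {i} - {j}) t c. wt z p) * (z i * z j))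
      = (\<Sum>i\<in>?U. \<Sum>j\<in>?U - {i}. \<Sum>p\<in>Pairs (?U - {i} - {j}) t c. wt z (fst p, insert i (insert j (snd p))))"
  proof (intro sum.cong refl)
    fix i j assume i: "i \<in> ?U" and j: "j \<in> ?U - {i}"
    have "(\<Sum>p\<in>Pairs (?U - {i} - {j}) t c. wt z p) * (z i * z j) = (\<Sum>p\<in>Pairs (?U - {i} - {j}) t c. wt z p * (z i * z j))"
      by (simp add: sum_distrib_right)
    also have "\<dots> = (\<Sum>p\<in>Pairs (?U - {i} - {j}) t c. wt z (fst p, insert i (insert j (snd p))))"
    proof (rule sum.cong[OF refl])
      fix p assume p: "p \<in> Pairs (?U - {i} - {j}) t c"
      then have "snd p \<subseteq> ?U" "i \<notin> snd p" "j \<notin> snd p" by (auto simp: Pairs_def)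
      then show "wt z p * (z i * z j) = wt z (fst p, insert i (insert j (snd p)))"
        using j by (intro wt_lin) (auto intro: finite_subset)
    qed
    finally show "(\<Sum>p\<in>Pairs (?U - {i} - {j}) t c. wt z p) * (z i * z j) = (\<Sum>p\<in>Pairs (?U - {i} - {j}) t c. wt z (fst p, insert i (insert j (snd p))))" .
  qed
  also have "\<dots> = (\<Sum>i\<in>?U. of_nat (c + 1) * (\<Sum>p\<in>Pairs (?U - {i}) t (c + 1). wt z (fst p, insert i (snd p))))"
  proof (rule sum.cong[OF refl])
    fix i assume i: "i \<in> ?U"
    show "(\<Sum>j\<in>?U - {i}. \<Sum>p\<in>Pairs (?U - {i} - {j}) t c. wt z (fst p, insert i (insert j (snd p))))
        = of_nat (c + 1) * (\<Sum>p\<in>Pairs (?U - {i}) t (c + 1). wt z (fst p, insert i (snd p)))"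
      using sum_addC[where V="?U - {i}" and t=t and c=c and f="\<lambda>p. wt z (fst p, insert i (snd p))"] by simp
  qed
  also have "\<dots> = of_nat (c + 1) * (\<Sum>i\<in>?U. \<Sum>p\<in>Pairs (?U - {i}) t (c + 1). wt z (fst p, insert i (snd p)))"
    by (simp add: sum_distrib_left)
  also have "\<dots> = of_nat (c + 1) * (of_nat (c + 1 + 1) * (\<Sum>p\<in>Pairs ?U t (c + 1 + 1). wt z p))"
    using sum_addC[where V="?U" and t=t and c="c+1" and f="wt z"] by simp
  finally show ?thesis by (simp add: ac_simps)
qed




definition cc :: "nat \<Rightarrow> nat \<Rightarrow> nat \<Rightarrow> nat" where "cc m k t = m + (m + k) - 2 * t"

definition Qn :: "nat \<Rightarrow> (nat \<Rightarrow> 'a::comm_ring_1) \<Rightarrow> nat \<Rightarrow> nat \<Rightarrow> 'a" where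
  "Qn n z a c = (\<Sum>p\<in>Pairs {1..n} a c. wt z p)"

lemma esym_excl_ord: "i < j \<Longrightarrow> esym_excl n j i r z = esym_excl n i j r z"
  by (rule esym_excl_sym)

lemma M_poly_eq:
  fixes z :: "nat \<Rightarrow> 'a::comm_ring_1"
  assumes "m2 \<ge> 1"
  shows "M_poly m2 m1 n z = of_nat (fact m2 * fact m1 * (n - m2 - m1)) * Qn n z m2 m1
     - of_nat (fact (m2 - 1) * fact (m1 + 2)) * Qn n z (m2 - 1) (m1 + 2)"
proof -
  obtain q where q: "m2 = Suc q" using assms by (cases m2) auto
  have 1: "(\<Sum>bs\<in>dtuples (m1 + m2 + 1) n. (\<Prod>p<m2. z (bs ! p) ^ 2) * (\<Prod>p\<in>{m2..<m2 + m1}. z (bs ! p)))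
     = of_nat (fact m2 * fact m1 * (n - m2 - m1)) * Qn n z m2 m1"
    using tuple_sum[where e=1 and a=m2 and c=m1 and n=n and z=z] unfolding Qn_def by (simp add: add.commute)
  have 2: "(\<Sum>bs\<in>dtuples (m1 + m2 + 1) n. (\<Prod>p<m2 - 1. z (bs ! p) ^ 2) * (\<Prod>p\<in>{m2 - 1..<m2 + m1 + 1}. z (bs ! p)))
     = of_nat (fact (m2 - 1) * fact (m1 + 2)) * Qn n z (m2 - 1) (m1 + 2)"
  proof -
    have eq2: "m2 - 1 + (m1 + 2) = m2 + m1 + 1" using assms by simp
    have eq1: "m2 + m1 + 1 + 0 = m1 + m2 + 1" by simp
    show ?thesis
      using tuple_sum[where e=0 and a="m2 - 1" and c="m1 + 2" and n=n and z=z] unfolding Qn_def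
      by (simp only: eq1 eq2 power_0 mult_1_right)
  qed
  show ?thesis unfolding M_poly_def 1 2 ..
qed

lemma E_expand:
  fixes z :: "nat \<Rightarrow> 'a::comm_ring_1"
  shows "E_entry n (m + 1) (m + k + 1) z = of_nat (fact m * fact (m + k)) *
    (\<Sum>t = 0..m. of_nat (cc m k t choose (m - t)) *
       (of_nat (n - 1 - t - cc m k t) * of_nat (t + 1) * Qn n z (t + 1) (cc m k t)
        - of_nat (cc m k t + 1) * of_nat (cc m k t + 2) * Qn n z t (cc m k t + 2)))"
proof -
  let ?U = "{1..n::nat}"
  let ?H = "\<lambda>i j. esym_excl n i j m z * esym_excl n i j (m + k) z"
  let ?F = "\<lambda>i j. ?H i j * (z i ^ 2 - z i * z j)"
  let ?Qx = "\<lambda>i j t. (\<Sum>p\<in>Pairs (?U - {i} - {j}) t (cc m k t). wt z p)"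
  have s1: "(\<Sum>i\<in>?U. \<Sum>j\<in>{i<..n}. ?H i j * (z i - z j) ^ 2) = (\<Sum>i\<in>?U. \<Sum>j\<in>{i<..n}. ?F i j + ?F j i)"
    by (intro sum.cong refl) (simp add: esym_excl_ord power2_eq_square algebra_simps)
  also have "\<dots> = (\<Sum>i\<in>?U. \<Sum>j\<in>?U - {i}. ?F i j)"
    by (rule sym_split[symmetric])
  also have "\<dots> = (\<Sum>i\<in>?U. \<Sum>j\<in>?U - {i}. (\<Sum>t = 0..m. of_nat (cc m k t choose (m - t)) * ?Qx i j t) * (z i ^ 2 - z i * z j))"
  proof (intro sum.cong refl)
    fix i j
    have "?H i j = (\<Sum>t = 0..m. of_nat (cc m k t choose (m - t)) * ?Qx i j t)"
      unfolding esym_excl_Sub cc_def by (rule prod_esym) auto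
    then show "?F i j = (\<Sum>t = 0..m. of_nat (cc m k t choose (m - t)) * ?Qx i j t) * (z i ^ 2 - z i * z j)" by simp
  qed
  also have "\<dots> = (\<Sum>i\<in>?U. \<Sum>j\<in>?U - {i}. \<Sum>t = 0..m. of_nat (cc m k t choose (m - t)) * ?Qx i j t * (z i ^ 2 - z i * z j))"
    by (simp add: sum_distrib_right)
  also have "\<dots> = (\<Sum>i\<in>?U. \<Sum>t = 0..m. \<Sum>j\<in>?U - {i}. of_nat (cc m k t choose (m - t)) * ?Qx i j t * (z i ^ 2 - z i * z j))"
    by (rule sum.cong[OF refl], rule sum.swap)
  also have "\<dots> = (\<Sum>t = 0..m. \<Sum>i\<in>?U. \<Sum>j\<in>?U - {i}. of_nat (cc m k t choose (m - t)) * ?Qx i j t * (z i ^ 2 - z i * z j))"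
    by (rule sum.swap)
  also have "\<dots> = (\<Sum>t = 0..m. of_nat (cc m k t choose (m - t)) *
       ((\<Sum>i\<in>?U. \<Sum>j\<in>?U - {i}. ?Qx i j t * z i ^ 2) - (\<Sum>i\<in>?U. \<Sum>j\<in>?U - {i}. ?Qx i j t * (z i * z j))))"
  proof (rule sum.cong[OF refl])
    fix t
    let ?b = "of_nat (cc m k t choose (m - t)) :: 'a"
    have "(\<Sum>i\<in>?U. \<Sum>j\<in>?U - {i}. ?b * ?Qx i j t * (z i ^ 2 - z i * z j))
      = (\<Sum>i\<in>?U. \<Sum>j\<in>?U - {i}. ?b * (?Qx i j t * z i ^ 2) - ?b * (?Qx i j t * (z i * z j)))"
      by (intro sum.cong refl) (simp add: algebra_simps)
    also have "\<dots> = ?b * (\<Sum>i\<in>?U. \<Sum>j\<in>?U - {i}. ?Qx i j t * z i ^ 2) - ?b * (\<Sum>i\<in>?U. \<Sum>j\<in>?U - {i}. ?Qx i j t * (z i * z j))"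
      by (simp only: sum_subtractf sum_distrib_left)
    finally show "(\<Sum>i\<in>?U. \<Sum>j\<in>?U - {i}. ?b * ?Qx i j t * (z i ^ 2 - z i * z j))
      = ?b * ((\<Sum>i\<in>?U. \<Sum>j\<in>?U - {i}. ?Qx i j t * z i ^ 2) - (\<Sum>i\<in>?U. \<Sum>j\<in>?U - {i}. ?Qx i j t * (z i * z j)))"
      by (simp add: right_diff_distrib)
  qed
  also have "\<dots> = (\<Sum>t = 0..m. of_nat (cc m k t choose (m - t)) *
       (of_nat (n - 1 - t - cc m k t) * of_nat (t + 1) * Qn n z (t + 1) (cc m k t)
        - of_nat (cc m k t + 1) * of_nat (cc m k t + 2) * Qn n z t (cc m k t + 2)))"
    unfolding Qn_def T1 T2 ..
  finally have main: "(\<Sum>i\<in>?U. \<Sum>j\<in>{i<..n}. ?H i j * (z i - z j) ^ 2) = \<dots>" .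
  show ?thesis unfolding E_entry_def using main by simp
qed




lemma ring_aux:
  fixes fi fik bc fc ft bm fm D fmk t1 :: nat
  assumes "fi * fik * bc = fc" "fi * ft * bm = fm" "fik * D = fmk"
  shows "fm * fmk * bc * t1 * (fi * fik) = bm * D * (t1 * ft) * fc * (fi * fik)"
    and "fm * fmk * bc * X * (fi * fik) = bm * D * (ft * (X * fc)) * (fi * fik)"
  unfolding assms[symmetric] by (simp_all add: ac_simps)

lemma coef_id_aux:
  fixes t i k :: nat
  shows "fact (t + i) * fact (t + i + k) * ((k + 2 * i) choose i) * (t + 1)
      = ((t + i) choose i) * (fact (t + i + k) div fact (i + k)) * fact (t + 1) * fact (k + 2 * i)"
    and "fact (t + i) * fact (t + i + k) * ((k + 2 * i) choose i) * ((k + 2 * i + 1) * (k + 2 * i + 2))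
      = ((t + i) choose i) * (fact (t + i + k) div fact (i + k)) * (fact t * fact (k + 2 * i + 2))"
proof -
  have h1: "fact i * fact (i + k) * ((k + 2 * i) choose i) = (fact (k + 2 * i) :: nat)"
    using binomial_fact_lemma[of i "k + 2 * i"] by (simp add: add.commute)
  have h2: "fact i * fact t * ((t + i) choose i) = (fact (t + i) :: nat)"
    using binomial_fact_lemma[of i "t + i"] by simp
  have h3: "fact (i + k) * (fact (t + i + k) div fact (i + k)) = (fact (t + i + k) :: nat)"
    by (rule dvd_mult_div_cancel) (rule fact_dvd; simp)
  have P: "fact i * fact (i + k) \<noteq> (0::nat)" by simp
  have f1: "fact (t + 1) = (t + 1) * (fact t :: nat)" by simp
  have f2: "fact (k + 2 * i + 2) = ((k + 2 * i + 1) * (k + 2 * i + 2)) * (fact (k + 2 * i) :: nat)"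
    by (simp add: algebra_simps)
  show "fact (t + i) * fact (t + i + k) * ((k + 2 * i) choose i) * (t + 1)
      = ((t + i) choose i) * (fact (t + i + k) div fact (i + k)) * fact (t + 1) * fact (k + 2 * i)"
    unfolding f1 using ring_aux(1)[OF h1 h2 h3, of "t + 1"] P by simp
  show "fact (t + i) * fact (t + i + k) * ((k + 2 * i) choose i) * ((k + 2 * i + 1) * (k + 2 * i + 2))
      = ((t + i) choose i) * (fact (t + i + k) div fact (i + k)) * (fact t * fact (k + 2 * i + 2))"
    unfolding f2 using ring_aux(2)[OF h1 h2 h3, of "(k + 2 * i + 1) * (k + 2 * i + 2)"] P by simp
qed

lemma coef_id:
  assumes "t \<le> m"
  shows "fact m * fact (m + k) * (cc m k t choose (m - t)) * (t + 1)
      = (m choose (m - t)) * (fact (m + k) div fact (m - t + k)) * fact (t + 1) * fact (cc m k t)"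
    and "fact m * fact (m + k) * (cc m k t choose (m - t)) * ((cc m k t + 1) * (cc m k t + 2))
      = (m choose (m - t)) * (fact (m + k) div fact (m - t + k)) * (fact t * fact (cc m k t + 2))"
proof -
  obtain i where mi: "m = t + i" using assms le_iff_add by blast
  have e1: "m - t = i" "cc m k t = k + 2 * i" "m + k = t + i + k" using mi by (auto simp: cc_def)
  show "fact m * fact (m + k) * (cc m k t choose (m - t)) * (t + 1)
      = (m choose (m - t)) * (fact (m + k) div fact (m - t + k)) * fact (t + 1) * fact (cc m k t)"
    unfolding e1 unfolding mi by (rule coef_id_aux(1))
  show "fact m * fact (m + k) * (cc m k t choose (m - t)) * ((cc m k t + 1) * (cc m k t + 2))
      = (m choose (m - t)) * (fact (m + k) div fact (m - t + k)) * (fact t * fact (cc m k t + 2))"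
    unfolding e1 unfolding mi by (rule coef_id_aux(2))
qed

theorem lemma3p9:
  fixes z :: "nat \<Rightarrow> 'a::comm_ring_1" and n m k :: nat
  assumes "n \<ge> 2"
  shows "E_entry n (m + 1) (m + k + 1) z =
    (\<Sum>i = 0..m. of_nat ((m choose i) * (fact (m + k) div fact (i + k))) *
        M_poly (m + 1 - i) (k + 2 * i) n z)"
proof -
  have "(\<Sum>i = 0..m. of_nat ((m choose i) * (fact (m + k) div fact (i + k))) * M_poly (m + 1 - i) (k + 2 * i) n z)
     = (\<Sum>t = 0..m. of_nat ((m choose (m - t)) * (fact (m + k) div fact (m - t + k))) * M_poly (m + 1 - (m - t)) (k + 2 * (m - t)) n z)"
    using sum.atLeastAtMost_rev[of "\<lambda>i. of_nat ((m choose i) * (fact (m + k) div fact (i + k))) * M_poly (m + 1 - i) (k + 2 * i) n z" 0 m]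
    by simp
  also have "\<dots> = (\<Sum>t = 0..m. of_nat (fact m * fact (m + k)) * (of_nat (cc m k t choose (m - t)) *
       (of_nat (n - 1 - t - cc m k t) * of_nat (t + 1) * Qn n z (t + 1) (cc m k t)
        - of_nat (cc m k t + 1) * of_nat (cc m k t + 2) * Qn n z t (cc m k t + 2))))"
  proof (rule sum.cong[OF refl])
    fix t assume "t \<in> {0..m}"
    then have tm: "t \<le> m" by simp
    let ?c = "cc m k t"
    let ?B = "(m choose (m - t)) * (fact (m + k) div fact (m - t + k))"
    have e: "m + 1 - (m - t) = t + 1" "k + 2 * (m - t) = ?c" "t + 1 - 1 = t" "n - (t + 1) - ?c = n - 1 - t - ?c"
      using tm by (auto simp: cc_def)
    have R: "of_nat ?B * M_poly (m + 1 - (m - t)) (k + 2 * (m - t)) n z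
      = of_nat (?B * fact (t + 1) * fact ?c) * of_nat (n - 1 - t - ?c) * Qn n z (t + 1) ?c
        - of_nat (?B * (fact t * fact (?c + 2))) * (Qn n z t (?c + 2) :: 'a)"
      unfolding e(1,2) M_poly_eq[of "t + 1", OF le_add2] e(3,4)
      by (simp only: of_nat_mult) (simp only: algebra_simps)
    have L: "of_nat (fact m * fact (m + k)) * (of_nat (?c choose (m - t)) *
       (of_nat (n - 1 - t - ?c) * of_nat (t + 1) * Qn n z (t + 1) ?c
        - of_nat (?c + 1) * of_nat (?c + 2) * Qn n z t (?c + 2)))
      = of_nat (fact m * fact (m + k) * (?c choose (m - t)) * (t + 1)) * of_nat (n - 1 - t - ?c) * Qn n z (t + 1) ?c
        - of_nat (fact m * fact (m + k) * (?c choose (m - t)) * ((?c + 1) * (?c + 2))) * (Qn n z t (?c + 2) :: 'a)"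
      by (simp only: of_nat_mult) (simp only: algebra_simps)
    show "of_nat ?B * M_poly (m + 1 - (m - t)) (k + 2 * (m - t)) n z = of_nat (fact m * fact (m + k)) * (of_nat (?c choose (m - t)) *
       (of_nat (n - 1 - t - ?c) * of_nat (t + 1) * Qn n z (t + 1) ?c
        - of_nat (?c + 1) * of_nat (?c + 2) * Qn n z t (?c + 2)))"
      unfolding R L coef_id[OF tm] ..
  qed
  also have "\<dots> = E_entry n (m + 1) (m + k + 1) z"
    unfolding E_expand by (simp add: sum_distrib_left)
  finally show ?thesis by simp
qed


end
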